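(* Let $A\in\mathbb{C}^{n\times m}$, $\alpha_1\ge1/\sqrt n$, $\alpha_2\ge1/\sqrt m$, $U=\{u\in\mathbb{C}^n:\|u\|\le\alpha_1,\operatorname{Re}(u)\ge0,\sum_iu_i=1\}$, $V=\{v\in\mathbb{C}^m:\|v\|\le\alpha_2,\operatorname{Re}(v)\ge0,\sum_iv_i=1\}$. Let $\mu_B\in\mathbb{C}^{1\times n}$, $b\in\mathbb{R}$, $\mu_D\in\mathbb{C}^{1\times m}$, $d\in\mathbb{R}$, and let $(\Gamma_B,J_B)$, $(\Gamma_D,J_D)$ be the covariance and pseudo-covariance matrices of complex random row vectors $B\in\mathbb{C}^{1\times n}$, $D\in\mathbb{C}^{1\times m}$. For $p=(p_1,p_2)$ set $$S_1(p_1)=\Big\{u\in U:\operatorname{Re}(\mu_Bu)+k_{p_1}\sqrt{\tfrac12\big(u^H\Gamma_Bu+\operatorname{Re}(u^TJ_Bu)\big)}\le b\Big\},$$ $$S_2(p_2)=\Big\{v\in V:\operatorname{Re}(\mu_Dv)-k_{p_2}\sqrt{\tfrac12\big(v^H\Gamma_Dv+\operatorname{Re}(v^TJ_Dv)\big)}\ge d\Big\},$$ where for each $j$, $k_{p_j}$ and the range of $p_j$ are given by one of the following cases: (i) CES distribution: $p_j\in[0.5,1)$, $k_{p_j}=\Phi^{-1}(p_j)$; (ii) known first two moments: $p_j\in(0,1)$, $k_{p_j}=\sqrt{p_j/(1-p_j)}$; (iii) unknown second-order moment: $p_j\in(0,1)$, $k_{p_j}=\sqrt{p_j/(1-p_j)}$;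 (iv) unknown moments (proper case): $p_j\in(0,1)$, $k_{p_j}=\sqrt{p_j/(1-p_j)}\sqrt{\zeta_2}+\sqrt{\zeta_1}$ with constants $\zeta_1,\zeta_2\ge0$. Assume there exist $u\in S_1(p_1)$ and $v\in S_2(p_2)$ for which all defining inequality constraints hold strictly. Then the game $G(p)=\max_{u\in S_1(p_1)}\min_{v\in S_2(p_2)}\operatorname{Re}(u^HAv)$ admits a saddle-point equilibrium, i.e. there exists $(u^\star,v^\star)\in S_1(p_1)\times S_2(p_2)$ with $$\operatorname{Re}(u^HAv^\star)\le\operatorname{Re}(u^{\star H}Av^\star)\le\operatorname{Re}(u^{\star H}Av)\qquad\forall(u,v)\in S_1(p_1)\times S_2(p_2).$$
   Context: $\|\cdot\|$ is the Euclidean norm, $^H$ conjugate transpose, $\operatorname{Re}(u)\ge0$ componentwise. The quantities $\tfrac12(u^H\Gamma_Bu+\operatorname{Re}(u^TJ_Bu))$ and $\tfrac12(v^H\Gamma_Dv+\operatorname{Re}(v^TJ_Dv))$ are, by the paper's convention, the variances of $\operatorname{Re}(Bu)$ and $\operatorname{Re}(Dv)$, hence nonnegative (positive semidefinite quadratic forms in $(\operatorname{Re}u,\operatorname{Im}u)$, resp. $(\operatorname{Re}v,\operatorname{Im}v)$). $\Phi^{-1}$ is the inverse cumulative distribution function (quantile function) of the standard complex elliptically symmetric distribution used in the chance-constraint reformulation. A complex elliptically symmetric distribution with mean $\mu$, covariance $\Gamma$, pseudo-covariance $J$ has characteristic function $\exp(i\operatorname{Re}(z^H\mu))\,\psi(z^H\Gamma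 z+\operatorname{Re}(z^HJ\bar z))$ for some generator $\psi$. *)

theory Defs
  imports "HOL-Probability.Probability"
begin

text \<open>Vectors in C^n are complex^'n; an n x m matrix is complex^'m^'n.\<close>

definition lin :: "complex^'n \<Rightarrow> complex^'n \<Rightarrow> complex" where
  "lin mu u = (\<Sum>i\<in>UNIV. mu$i * u$i)"

definition herm_form :: "complex^'n^'n \<Rightarrow> complex^'n \<Rightarrow> complex" where
  "herm_form G u = (\<Sum>i\<in>UNIV. \<Sum>j\<in>UNIV. cnj (u$i) * G$i$j * u$j)"

definition sym_form :: "complex^'n^'n \<Rightarrow> complex^'n \<Rightarrow> complex" where
  "sym_form J u = (\<Sum>i\<in>UNIV. \<Sum>j\<in>UNIV. u$i * J$i$j * u$j)"

definition bilin :: "complex^'n \<Rightarrow> complex^'m^'n \<Rightarrow> complex^'m \<Rightarrow> complex" where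
  "bilin u A v = (\<Sum>i\<in>UNIV. \<Sum>j\<in>UNIV. cnj (u$i) * A$i$j * v$j)"

text \<open>Variance of Re(B u): (1/2)(u^H Gamma u + Re(u^T J u)).\<close>
definition varq :: "complex^'n^'n \<Rightarrow> complex^'n^'n \<Rightarrow> complex^'n \<Rightarrow> real" where
  "varq G J u = (Re (herm_form G u) + Re (sym_form J u)) / 2"

text \<open>(G,J) is a covariance / pseudo-covariance pair of some complex random row
  vector: G Hermitian, J symmetric, and the induced variance form nonnegative
  (equivalently the covariance of (Re B, Im B) is positive semidefinite).\<close>
definition cov_pair :: "complex^'n^'n \<Rightarrow> complex^'n^'n \<Rightarrow> bool" where
  "cov_pair G J \<longleftrightarrow> (\<forall>i j. G$i$j = cnj (G$j$i)) \<and> (\<forall>i j. J$i$j = J$j$i)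
      \<and> (\<forall>u. 0 \<le> varq G J u)"

text \<open>Standard complex elliptically symmetric distribution (mean 0, Gamma = 1, J = 0):
  characteristic function z \<mapsto> psi(|z|^2).\<close>
definition std_CES :: "complex measure \<Rightarrow> bool" where
  "std_CES M \<longleftrightarrow> prob_space M \<and> sets M = sets borel \<and>
     (\<exists>psi :: real \<Rightarrow> complex. \<forall>z. (LINT w|M. cis (Re (cnj z * w))) = psi ((cmod z)\<^sup>2))"

definition CES_cdf :: "complex measure \<Rightarrow> real \<Rightarrow> real" where
  "CES_cdf M x = measure M {w. Re w \<le> x}"

definition CES_quantile :: "complex measure \<Rightarrow> real \<Rightarrow> real" where
  "CES_quantile M p = Inf {x. p \<le> CES_cdf M x}"

text \<open>Admissible pairs (p, k_p) according to cases (i)-(iv); (ii) and (iii) coincide.\<close>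
definition admissible_k :: "real \<Rightarrow> real \<Rightarrow> bool" where
  "admissible_k p k \<longleftrightarrow>
     (\<exists>M. std_CES M \<and> 1/2 \<le> p \<and> p < 1 \<and> k = CES_quantile M p)
   \<or> (0 < p \<and> p < 1 \<and> k = sqrt (p / (1 - p)))
   \<or> (\<exists>z1 z2. 0 \<le> z1 \<and> 0 \<le> z2 \<and> 0 < p \<and> p < 1 \<and>
        k = sqrt (p / (1 - p)) * sqrt z2 + sqrt z1)"

definition simplexU :: "real \<Rightarrow> (complex^'n) set" where
  "simplexU a = {u. norm u \<le> a \<and> (\<forall>i. 0 \<le> Re (u$i)) \<and> (\<Sum>i\<in>UNIV. u$i) = 1}"

definition S1 :: "real \<Rightarrow> complex^'n \<Rightarrow> real \<Rightarrow> complex^'n^'n \<Rightarrow> complex^'n^'n \<Rightarrow> real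
                   \<Rightarrow> (complex^'n) set" where
  "S1 a muB b GB JB k = {u \<in> simplexU a. Re (lin muB u) + k * sqrt (varq GB JB u) \<le> b}"

definition S2 :: "real \<Rightarrow> complex^'m \<Rightarrow> real \<Rightarrow> complex^'m^'m \<Rightarrow> complex^'m^'m \<Rightarrow> real
                   \<Rightarrow> (complex^'m) set" where
  "S2 a muD d GD JD k = {v \<in> simplexU a. Re (lin muD v) - k * sqrt (varq GD JD v) \<ge> d}"

end

theory Submission
  imports Defs
begin


definition bh :: "complex^'n^'n \<Rightarrow> complex^'n \<Rightarrow> complex^'n \<Rightarrow> complex" where
  "bh G x y = (\<Sum>i\<in>UNIV. \<Sum>j\<in>UNIV. cnj (x$i) * G$i$j * y$j)"
definition bs :: "complex^'n^'n \<Rightarrow> complex^'n \<Rightarrow> complex^'n \<Rightarrow> complex" where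
  "bs G x y = (\<Sum>i\<in>UNIV. \<Sum>j\<in>UNIV. x$i * G$i$j * y$j)"

lemma comp_lin: "(x + t *\<^sub>R y)$k = x$k + of_real t * y$k"
  by (simp only: vector_add_component vector_scaleR_component, simp add: scaleR_conv_of_real)

lemma herm_expand:
  "herm_form G (x + t *\<^sub>R y) = herm_form G x + of_real t * (bh G x y + bh G y x) + of_real (t^2) * herm_form G y"
proof -
  have e: "cnj ((x + t *\<^sub>R y)$i) * G$i$j * (x + t *\<^sub>R y)$j =
     cnj (x$i) * G$i$j * x$j + of_real t * (cnj (x$i) * G$i$j * y$j + cnj (y$i) * G$i$j * x$j)
      + of_real (t^2) * (cnj (y$i) * G$i$j * y$j)" for i j
    unfolding comp_lin by (simp add: algebra_simps power2_eq_square)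
  show ?thesis unfolding herm_form_def bh_def e
    by (simp add: sum.distrib sum_distrib_left distrib_left)
qed

lemma sym_expand:
  "sym_form G (x + t *\<^sub>R y) = sym_form G x + of_real t * (bs G x y + bs G y x) + of_real (t^2) * sym_form G y"
proof -
  have e: "((x + t *\<^sub>R y)$i) * G$i$j * (x + t *\<^sub>R y)$j =
     (x$i) * G$i$j * x$j + of_real t * ((x$i) * G$i$j * y$j + (y$i) * G$i$j * x$j)
      + of_real (t^2) * ((y$i) * G$i$j * y$j)" for i j
    unfolding comp_lin by (simp add: algebra_simps power2_eq_square)
  show ?thesis unfolding sym_form_def bs_def e
    by (simp add: sum.distrib sum_distrib_left distrib_left)
qed

definition cq :: "complex^'n^'n \<Rightarrow> complex^'n^'n \<Rightarrow> complex^'n \<Rightarrow> complex^'n \<Rightarrow> real" where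
  "cq G J x y = (Re (bh G x y + bh G y x) + Re (bs J x y + bs J y x)) / 2"

lemma varq_expand:
  "varq G J (x + t *\<^sub>R y) = varq G J x + t * cq G J x y + t^2 * varq G J y"
  unfolding varq_def cq_def herm_expand sym_expand
  by (simp add: field_simps)

lemma varq_zero: "varq G J 0 = 0"
  unfolding varq_def herm_form_def sym_form_def by simp

lemma varq_scale: "varq G J (t *\<^sub>R y) = t^2 * varq G J y"
  using varq_expand[of G J 0 t y] by (simp add: varq_zero cq_def bh_def bs_def)

lemma discr:
  fixes a b c :: real
  assumes "\<And>t. 0 \<le> a + t * c + t^2 * b" "0 \<le> a" "0 \<le> b"
  shows "c^2 \<le> 4 * a * b"
proof (cases "b = 0")
  case True
  have "c = 0"
  proof (rule ccontr)
    assume "c \<noteq> 0"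
    have "0 \<le> a + (-(a+1)/c) * c" using assms(1)[of "-(a+1)/c"] True by simp
    with \<open>c \<noteq> 0\<close> show False by simp
  qed
  then show ?thesis using True by simp
next
  case False
  then have b: "b > 0" using assms by simp
  have "0 \<le> a + (-c/(2*b)) * c + (-c/(2*b))^2 * b" by (rule assms(1))
  also have "\<dots> = a - c^2/(4*b)" using b by (simp add: field_simps power2_eq_square)
  finally show ?thesis using b by (simp add: field_simps)
qed

lemma sqrt_varq_triangle:
  assumes "\<forall>u. 0 \<le> varq G J u"
  shows "sqrt (varq G J (x + y)) \<le> sqrt (varq G J x) + sqrt (varq G J y)"
proof -
  let ?a = "varq G J x" and ?b = "varq G J y" and ?c = "cq G J x y"
  have nn: "0 \<le> ?a" "0 \<le> ?b" using assms by auto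
  have "?c^2 \<le> 4 * ?a * ?b"
    by (rule discr) (metis assms varq_expand, use nn in auto)
  hence "?c^2 \<le> (2 * sqrt ?a * sqrt ?b)^2" using nn by (simp add: power_mult_distrib)
  hence "?c \<le> 2 * sqrt ?a * sqrt ?b"
    by (rule power2_le_imp_le) (use nn in auto)
  hence "varq G J (x + y) \<le> (sqrt ?a + sqrt ?b)^2"
    using varq_expand[of G J x 1 y] nn by (simp add: power2_eq_square algebra_simps)
  hence "sqrt (varq G J (x + y)) \<le> sqrt ((sqrt ?a + sqrt ?b)^2)" by (rule real_sqrt_le_mono)
  thus ?thesis using nn by simp
qed

lemma sqrt_varq_convex:
  assumes "\<forall>u. 0 \<le> varq G J u" "0 \<le> a" "0 \<le> b"
  shows "sqrt (varq G J (a *\<^sub>R x + b *\<^sub>R y)) \<le> a * sqrt (varq G J x) + b * sqrt (varq G J y)"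
  using sqrt_varq_triangle[OF assms(1), of "a *\<^sub>R x" "b *\<^sub>R y"] assms
  by (simp add: varq_scale real_sqrt_mult)



lemma inner_complex_cnj: "inner (a::complex) b = Re (cnj a * b)"
  by (simp add: inner_complex_def)

definition L1 :: "complex^'m^'n \<Rightarrow> complex^'m \<Rightarrow> complex^'n" where
  "L1 A v = (\<chi> i. \<Sum>j\<in>UNIV. A$i$j * v$j)"
definition L2 :: "complex^'m^'n \<Rightarrow> complex^'n \<Rightarrow> complex^'m" where
  "L2 A u = (\<chi> j. \<Sum>i\<in>UNIV. cnj (A$i$j) * u$i)"

lemma bilin_L1: "Re (bilin u A v) = inner u (L1 A v)"
  unfolding bilin_def L1_def inner_vec_def inner_complex_cnj
  by (simp add: sum_distrib_left mult.assoc Re_sum)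

lemma bilin_L2: "Re (bilin u A v) = inner (L2 A u) v"
proof -
  have "inner (L2 A u) v = (\<Sum>j\<in>UNIV. \<Sum>i\<in>UNIV. Re (A$i$j * cnj (u$i) * v$j))"
    unfolding L2_def inner_vec_def inner_complex_cnj
    by (simp add: cnj_sum sum_distrib_right Re_sum)
  also have "\<dots> = (\<Sum>i\<in>UNIV. \<Sum>j\<in>UNIV. Re (cnj (u$i) * A$i$j * v$j))"
    by (subst sum.swap) (simp add: mult.commute)
  also have "\<dots> = Re (bilin u A v)" unfolding bilin_def by (simp add: Re_sum)
  finally show ?thesis by simp
qed

lemma linear_L1: "linear (L1 A)"
  unfolding L1_def
  by (rule linearI) (simp_all add: vec_eq_iff sum.distrib scaleR_sum_right algebra_simps)

lemma linear_L2: "linear (L2 A)"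
  unfolding L2_def
  by (rule linearI) (simp_all add: vec_eq_iff sum.distrib scaleR_sum_right algebra_simps)

lemma cont_varq: "continuous_on X (varq G J)"
  unfolding varq_def herm_form_def sym_form_def
  by (intro continuous_intros) auto

lemma cont_lin: "continuous_on X (\<lambda>u. Re (lin mu u))"
  unfolding lin_def
  by (intro continuous_intros)

lemma closed_simplexU: "closed (simplexU a)"
proof -
  have eq: "simplexU a = {u. norm u \<le> a} \<inter> (\<Inter>i. {u. 0 \<le> Re (u$i)}) \<inter> {u. (\<Sum>i\<in>UNIV. u$i) = 1}"
    unfolding simplexU_def by auto
  have c1: "closed {u::complex^'a. norm u \<le> a}" by (intro closed_Collect_le continuous_intros)
  have c2: "closed {u::complex^'a. 0 \<le> Re (u$i)}" for i by (intro closed_Collect_le continuous_intros)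
  have c3: "closed {u::complex^'a. (\<Sum>i\<in>UNIV. u$i) = 1}" by (intro closed_Collect_eq continuous_intros)
  show ?thesis unfolding eq by (intro closed_Int closed_INT ballI c1 c2 c3)
qed

lemma compact_S1: "compact (S1 a mu b G J k)"
proof -
  have "S1 a mu b G J k = simplexU a \<inter> {u. Re (lin mu u) + k * sqrt (varq G J u) \<le> b}"
    unfolding S1_def by auto
  moreover have "closed {u::complex^'a. Re (lin mu u) + k * sqrt (varq G J u) \<le> b}"
    by (intro closed_Collect_le continuous_intros cont_lin continuous_on_compose2[OF continuous_on_real_sqrt cont_varq]) auto
  moreover have "bounded (S1 a mu b G J k)"
    unfolding S1_def simplexU_def bounded_iff by auto
  ultimately show ?thesis using closed_simplexU
    by (metis compact_eq_bounded_closed closed_Int)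
qed

lemma compact_S2: "compact (S2 a mu d G J k)"
proof -
  have "S2 a mu d G J k = simplexU a \<inter> {u. d \<le> Re (lin mu u) - k * sqrt (varq G J u)}"
    unfolding S2_def by auto
  moreover have "closed {u::complex^'a. d \<le> Re (lin mu u) - k * sqrt (varq G J u)}"
    by (intro closed_Collect_le continuous_intros cont_lin continuous_on_compose2[OF continuous_on_real_sqrt cont_varq]) auto
  moreover have "bounded (S2 a mu d G J k)"
    unfolding S2_def simplexU_def bounded_iff by auto
  ultimately show ?thesis using closed_simplexU
    by (metis compact_eq_bounded_closed closed_Int)
qed

lemma lin_comb: "Re (lin mu (s *\<^sub>R x + t *\<^sub>R y)) = s * Re (lin mu x) + t * Re (lin mu y)"
  unfolding lin_def
  by (simp only: vector_add_component vector_scaleR_component)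
     (simp add: Re_sum sum.distrib sum_distrib_left algebra_simps scaleR_conv_of_real)

lemma convex_simplexU: "convex (simplexU a)"
proof (rule convexI)
  fix x y :: "complex^'a" and s t :: real
  assume x: "x \<in> simplexU a" and y: "y \<in> simplexU a" and st: "0 \<le> s" "0 \<le> t" "s + t = 1"
  have nx: "norm x \<le> a" and ny: "norm y \<le> a" using x y unfolding simplexU_def by auto
  have n1: "norm (s *\<^sub>R x + t *\<^sub>R y) \<le> s * norm x + t * norm y"
    using norm_triangle_ineq[of "s *\<^sub>R x" "t *\<^sub>R y"] st by simp
  have n2: "s * norm x + t * norm y \<le> s * a + t * a"
    by (rule add_mono; rule mult_left_mono) (use nx ny st in auto)
  have n3: "s * a + t * a = a" using st by (metis distrib_right mult_1)
  have n: "norm (s *\<^sub>R x + t *\<^sub>R y) \<le> a" using n1 n2 n3 by linarith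
  have r: "0 \<le> Re ((s *\<^sub>R x + t *\<^sub>R y)$i)" for i
  proof -
    have "0 \<le> Re (x$i)" "0 \<le> Re (y$i)" using x y unfolding simplexU_def by auto
    thus ?thesis using st by simp
  qed
  have "(\<Sum>i\<in>UNIV. (s *\<^sub>R x + t *\<^sub>R y)$i) = (\<Sum>i\<in>UNIV. s *\<^sub>R x$i + t *\<^sub>R y$i)"
    by (simp only: vector_add_component vector_scaleR_component)
  also have "\<dots> = s *\<^sub>R (\<Sum>i\<in>UNIV. x$i) + t *\<^sub>R (\<Sum>i\<in>UNIV. y$i)"
    by (simp only: sum.distrib scaleR_sum_right)
  also have "\<dots> = s *\<^sub>R 1 + t *\<^sub>R 1" using x y unfolding simplexU_def by simp
  also have "\<dots> = 1" using st by (metis scaleR_add_left scaleR_one)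
  finally have "(\<Sum>i\<in>UNIV. (s *\<^sub>R x + t *\<^sub>R y)$i) = 1" .
  thus "s *\<^sub>R x + t *\<^sub>R y \<in> simplexU a" using n r unfolding simplexU_def by blast
qed

lemma convex_S1:
  assumes "\<forall>u. 0 \<le> varq G J u" "0 \<le> k"
  shows "convex (S1 a mu b G J k)"
proof (rule convexI)
  fix x y :: "complex^'a" and s t :: real
  assume x: "x \<in> S1 a mu b G J k" and y: "y \<in> S1 a mu b G J k" and st: "0 \<le> s" "0 \<le> t" "s + t = 1"
  let ?z = "s *\<^sub>R x + t *\<^sub>R y"
  have xU: "x \<in> simplexU a" and yU: "y \<in> simplexU a" using x y unfolding S1_def by auto
  have U: "?z \<in> simplexU a"
    using convexD[OF convex_simplexU xU yU st] .
  have cx: "Re (lin mu x) + k * sqrt (varq G J x) \<le> b" using x unfolding S1_def by blast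
  have cy: "Re (lin mu y) + k * sqrt (varq G J y) \<le> b" using y unfolding S1_def by blast
  have "k * sqrt (varq G J ?z) \<le> k * (s * sqrt (varq G J x) + t * sqrt (varq G J y))"
    by (rule mult_left_mono[OF sqrt_varq_convex[OF assms(1) st(1,2)] assms(2)])
  hence h1: "Re (lin mu ?z) + k * sqrt (varq G J ?z)
     \<le> s * (Re (lin mu x) + k * sqrt (varq G J x)) + t * (Re (lin mu y) + k * sqrt (varq G J y))"
    unfolding lin_comb by (simp add: algebra_simps)
  have h2: "s * (Re (lin mu x) + k * sqrt (varq G J x)) + t * (Re (lin mu y) + k * sqrt (varq G J y)) \<le> s * b + t * b"
    by (rule add_mono; rule mult_left_mono) (use cx cy st in auto)
  have h3: "s * b + t * b = b" using st by (metis distrib_right mult_1)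
  have "Re (lin mu ?z) + k * sqrt (varq G J ?z) \<le> b" using h1 h2 h3 by linarith
  thus "?z \<in> S1 a mu b G J k" using U unfolding S1_def by blast
qed

lemma convex_S2:
  assumes "\<forall>u. 0 \<le> varq G J u" "0 \<le> k"
  shows "convex (S2 a mu d G J k)"
proof (rule convexI)
  fix x y :: "complex^'a" and s t :: real
  assume x: "x \<in> S2 a mu d G J k" and y: "y \<in> S2 a mu d G J k" and st: "0 \<le> s" "0 \<le> t" "s + t = 1"
  let ?z = "s *\<^sub>R x + t *\<^sub>R y"
  have xU: "x \<in> simplexU a" and yU: "y \<in> simplexU a" using x y unfolding S2_def by auto
  have U: "?z \<in> simplexU a"
    using convexD[OF convex_simplexU xU yU st] .
  have cx: "d \<le> Re (lin mu x) - k * sqrt (varq G J x)" using x unfolding S2_def by blast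
  have cy: "d \<le> Re (lin mu y) - k * sqrt (varq G J y)" using y unfolding S2_def by blast
  have h3: "d = s * d + t * d" using st by (metis distrib_right mult_1)
  have h2: "s * d + t * d \<le> s * (Re (lin mu x) - k * sqrt (varq G J x)) + t * (Re (lin mu y) - k * sqrt (varq G J y))"
    by (rule add_mono; rule mult_left_mono) (use cx cy st in auto)
  have h1: "s * (Re (lin mu x) - k * sqrt (varq G J x)) + t * (Re (lin mu y) - k * sqrt (varq G J y)) \<le> Re (lin mu ?z) - k * sqrt (varq G J ?z)"
  proof -
    have "k * sqrt (varq G J ?z) \<le> k * (s * sqrt (varq G J x) + t * sqrt (varq G J y))"
      by (rule mult_left_mono[OF sqrt_varq_convex[OF assms(1) st(1,2)] assms(2)])
    thus ?thesis unfolding lin_comb by (simp add: algebra_simps)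
  qed
  have "d \<le> Re (lin mu ?z) - k * sqrt (varq G J ?z)" using h1 h2 h3 by linarith
  thus "?z \<in> S2 a mu d G J k" using U unfolding S2_def by blast
qed



lemma Re_cnj_meas: "(\<lambda>w::complex. Re (cnj z * w)) \<in> borel_measurable borel"
  by (intro borel_measurable_continuous_onI continuous_intros)

lemma CES_distr_eq:
  assumes M: "prob_space M" "sets M = sets borel"
    and psi: "\<And>z. (LINT w|M. cis (Re (cnj z * w))) = psi ((cmod z)\<^sup>2)"
    and eq: "cmod z1 = cmod z2"
  shows "distr M borel (\<lambda>w. Re (cnj z1 * w)) = distr M borel (\<lambda>w. Re (cnj z2 * w))"
proof -
  interpret prob_space M by fact
  have meas: "(\<lambda>w. Re (cnj z * w)) \<in> borel_measurable M" for z
    using Re_cnj_meas measurable_cong_sets[OF M(2) refl] by blast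
  have ch: "char (distr M borel (\<lambda>w. Re (cnj z * w))) t = psi ((t * cmod z)\<^sup>2)" for z t
  proof -
    have "char (distr M borel (\<lambda>w. Re (cnj z * w))) t = (CLINT w|M. iexp (t * Re (cnj z * w)))"
      unfolding char_def by (rule integral_distr[OF meas]) (intro borel_measurable_continuous_onI continuous_intros)
    also have "\<dots> = (CLINT w|M. cis (Re (cnj (of_real t * z) * w)))"
      by (simp add: cis_conv_exp mult.assoc)
    also have "\<dots> = psi ((t * cmod z)\<^sup>2)" using psi[of "of_real t * z"] by (simp add: norm_mult power_mult_distrib)
    finally show ?thesis .
  qed
  show ?thesis
    by (rule Levy_uniqueness) (use meas ch eq in \<open>auto intro!: real_distribution_distr\<close>)
qed


lemma cover_lemma:
  fixes w :: complex and c :: real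
  assumes c: "0 < c"
  shows "\<exists>z\<in>(\<lambda>(a,b). Complex a b) ` (\<rat> \<times> \<rat>) - {0}. \<bar>Re (cnj z * w)\<bar> < c * cmod z"
proof (cases "w = 0")
  case True
  have "Complex 1 0 \<in> (\<lambda>(a,b). Complex a b) ` (\<rat> \<times> \<rat>) - {0}"
    by (auto simp: image_iff complex_eq_iff)
  moreover have "\<bar>Re (cnj (Complex 1 0) * w)\<bar> < c * cmod (Complex 1 0)" using True c by (simp add: complex_norm)
  ultimately show ?thesis by blast
next
  case False
  define y where "y = \<i> * w"
  define \<delta> where "\<delta> = min (cmod w / 2) (c / 4)"
  have wp: "0 < cmod w" using False by simp
  have dp: "0 < \<delta>" unfolding \<delta>_def using wp c by simp
  obtain a where a: "a \<in> \<rat>" "Re y - \<delta>/2 < a" "a < Re y + \<delta>/2"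
    using Rats_dense_in_real[of "Re y - \<delta>/2" "Re y + \<delta>/2"] dp by auto
  obtain b where b: "b \<in> \<rat>" "Im y - \<delta>/2 < b" "b < Im y + \<delta>/2"
    using Rats_dense_in_real[of "Im y - \<delta>/2" "Im y + \<delta>/2"] dp by auto
  define z where "z = Complex a b"
  have "cmod (z - y) \<le> \<bar>Re (z - y)\<bar> + \<bar>Im (z - y)\<bar>" by (rule cmod_le)
  also have "\<dots> < \<delta>" using a b unfolding z_def by (simp add: abs_less_iff)
  finally have zy: "cmod (z - y) < \<delta>" .
  have ry: "Re (cnj y * w) = 0" unfolding y_def by (simp add: algebra_simps)
  have "Re (cnj z * w) = Re (cnj (z - y) * w)" using ry by (simp add: algebra_simps)
  hence "\<bar>Re (cnj z * w)\<bar> \<le> cmod (z - y) * cmod w"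
    by (metis abs_Re_le_cmod complex_mod_cnj norm_mult)
  also have "\<dots> < \<delta> * cmod w" using zy wp by simp
  also have "\<dots> \<le> (c / 4) * cmod w" using wp unfolding \<delta>_def by (intro mult_right_mono) auto
  finally have l: "\<bar>Re (cnj z * w)\<bar> < (c / 4) * cmod w" .
  have ny: "cmod y = cmod w" unfolding y_def by (simp add: norm_mult)
  have "cmod y \<le> cmod z + cmod (z - y)" by (metis norm_triangle_sub add.commute norm_minus_commute)
  moreover have "\<delta> \<le> cmod w / 2" unfolding \<delta>_def by simp
  ultimately have zz: "cmod w / 2 < cmod z" using zy ny by linarith
  have m1: "c * (cmod w / 2) < c * cmod z" using zz c by (rule mult_strict_left_mono)
  have "0 < c * cmod w" using c wp by simp
  hence "(c / 4) * cmod w < c * (cmod w / 2)" by simp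
  hence "(c / 4) * cmod w < c * cmod z" using m1 by linarith
  with l have "\<bar>Re (cnj z * w)\<bar> < c * cmod z" by linarith
  moreover have "z \<in> (\<lambda>(a,b). Complex a b) ` (\<rat> \<times> \<rat>) - {0}"
    using zz wp a(1) b(1) unfolding z_def by (auto simp: image_iff)
  ultimately show ?thesis by blast
qed


lemma CES_quantile_nonneg:
  assumes "std_CES M" "1/2 \<le> p" "p < 1"
  shows "0 \<le> CES_quantile M p"
proof -
  obtain psi where M: "prob_space M" "sets M = sets borel"
    and psi: "\<And>z. (LINT w|M. cis (Re (cnj z * w))) = psi ((cmod z)\<^sup>2)"
    using assms(1) unfolding std_CES_def by blast
  interpret prob_space M by fact
  have sp: "space M = UNIV" using sets_eq_imp_space_eq[OF M(2)] by simp
  have sM: "S \<in> sets M" if "S \<in> sets borel" for S using that M(2) by simp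
  have measX: "(\<lambda>w. Re (cnj z * w)) \<in> borel_measurable M" for z
    using Re_cnj_meas measurable_cong_sets[OF M(2) refl] by blast
  define D where "D z = distr M borel (\<lambda>w. Re (cnj z * w))" for z
  have Dm: "measure (D z) S = measure M {w. Re (cnj z * w) \<in> S}" if "S \<in> sets borel" for z S
    unfolding D_def by (subst measure_distr[OF measX that]) (auto simp: sp vimage_def)
  have Deq: "D z1 = D z2" if "cmod z1 = cmod z2" for z1 z2
    unfolding D_def by (rule CES_distr_eq[OF M psi that])
  have cdf_eq: "CES_cdf M x = cdf (D 1) x" for x
    unfolding CES_cdf_def cdf_def using Dm[of "{..x}" 1] by simp
  have rd: "real_distribution (D z)" for z unfolding D_def using measX by auto
  have "eventually (\<lambda>x. p < cdf (D 1) x) at_top"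
    using order_tendstoD(1)[OF real_distribution.cdf_lim_at_top_prob[OF rd] assms(3)] .
  then obtain x0 where "p < cdf (D 1) x0" using eventually_happens' trivial_limit_at_top_linorder by blast
  hence ne: "{x. p \<le> CES_cdf M x} \<noteq> {}" using cdf_eq by (metis empty_iff mem_Collect_eq less_imp_le)
  show ?thesis unfolding CES_quantile_def
  proof (rule cInf_greatest[OF ne])
    fix x assume "x \<in> {x. p \<le> CES_cdf M x}"
    hence px: "p \<le> measure M {w. Re w \<le> x}" unfolding CES_cdf_def by simp
    show "0 \<le> x"
    proof (rule ccontr)
      assume "\<not> 0 \<le> x"
      define c where "c = -x"
      have c: "0 < c" using \<open>\<not> 0 \<le> x\<close> c_def by simp
      have sym: "measure M {w. c \<le> Re w} = measure M {w. Re w \<le> x}"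
      proof -
        have "measure M {w. c \<le> Re w} = measure (D (-1)) {..x}"
        proof -
          have "{w. - Re w \<le> x} = {w. c \<le> Re w}" by (auto simp: c_def)
          thus ?thesis using Dm[of "{..x}" "-1"] by simp
        qed
        also have "\<dots> = measure (D 1) {..x}" using Deq[of "-1" 1] by simp
        also have "\<dots> = measure M {w. Re w \<le> x}" using Dm[of "{..x}" 1] by simp
        finally show ?thesis .
      qed
      have s1: "{w. Re w \<le> x} \<in> sets M"
        by (rule sM, rule borel_closed, intro closed_Collect_le continuous_intros)
      have s2: "{w. \<bar>Re w\<bar> < c} \<in> sets M"
        by (rule sM, rule borel_open, intro open_Collect_less continuous_intros)
      have s3: "{w. c \<le> Re w} \<in> sets M"
        by (rule sM, rule borel_closed, intro closed_Collect_le continuous_intros)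
      have "measure M {w. Re w \<le> x} + measure M {w. \<bar>Re w\<bar> < c}
          = measure M ({w. Re w \<le> x} \<union> {w. \<bar>Re w\<bar> < c})"
        by (rule finite_measure_Union[symmetric]) (use s1 s2 c c_def in auto)
      moreover have "measure M ({w. Re w \<le> x} \<union> {w. \<bar>Re w\<bar> < c}) + measure M {w. c \<le> Re w}
          = measure M ({w. Re w \<le> x} \<union> {w. \<bar>Re w\<bar> < c} \<union> {w. c \<le> Re w})"
        by (rule finite_measure_Union[symmetric]) (use s1 s2 s3 c c_def in auto)
      moreover have "{w. Re w \<le> x} \<union> {w. \<bar>Re w\<bar> < c} \<union> {w. c \<le> Re w} = space M"
        using c_def sp by auto
      ultimately have e: "measure M {w. Re w \<le> x} + measure M {w. \<bar>Re w\<bar> < c} + measure M {w. c \<le> Re w} = 1"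
        using prob_space by simp
      have "measure M {w. \<bar>Re w\<bar> < c} = 1 - 2 * measure M {w. Re w \<le> x}"
        using e sym by linarith
      hence m0: "measure M {w. \<bar>Re w\<bar> < c} = 0"
        using px assms(2) measure_nonneg[of M "{w. \<bar>Re w\<bar> < c}"] by linarith
      have nullz: "{w. \<bar>Re (cnj z * w)\<bar> < c * cmod z} \<in> null_sets M" if "z \<noteq> 0" for z
      proof -
        have zp: "0 < cmod z" using that by simp
        have ob: "{y::real. \<bar>y\<bar> < c * cmod z} \<in> sets borel"
          by (rule borel_open, intro open_Collect_less continuous_intros)
        have "measure M {w. \<bar>Re (cnj z * w)\<bar> < c * cmod z} = measure (D z) {y. \<bar>y\<bar> < c * cmod z}"
          using Dm[OF ob, of z] by simp
        also have "\<dots> = measure (D (of_real (cmod z))) {y. \<bar>y\<bar> < c * cmod z}"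
          using Deq[of z "of_real (cmod z)"] by simp
        also have "\<dots> = measure M {w. \<bar>cmod z * Re w\<bar> < c * cmod z}"
          using Dm[OF ob, of "of_real (cmod z)"] by simp
        also have "{w. \<bar>cmod z * Re w\<bar> < c * cmod z} = {w. \<bar>Re w\<bar> < c}"
          using zp by (auto simp: abs_mult mult.commute)
        finally have "measure M {w. \<bar>Re (cnj z * w)\<bar> < c * cmod z} = 0" using m0 by simp
        moreover have "{w. \<bar>Re (cnj z * w)\<bar> < c * cmod z} \<in> sets M"
          by (rule sM, rule borel_open, intro open_Collect_less continuous_intros)
        ultimately show ?thesis by (metis emeasure_eq_measure ennreal_0 null_setsI)
      qed
      define Q where "Q = (\<lambda>(a,b). Complex a b) ` (\<rat> \<times> \<rat>) - {0::complex}"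
      have cQ: "countable Q" unfolding Q_def by (intro countable_Diff countable_image countable_SIGMA countable_rat)
      have "(\<Union>z\<in>Q. {w. \<bar>Re (cnj z * w)\<bar> < c * cmod z}) \<in> null_sets M"
        by (rule null_sets_UN'[OF cQ]) (use nullz Q_def in auto)
      moreover have "space M \<subseteq> (\<Union>z\<in>Q. {w. \<bar>Re (cnj z * w)\<bar> < c * cmod z})"
        using cover_lemma[OF c] unfolding Q_def by blast
      ultimately have "space M \<in> null_sets M" using null_sets_subset by blast
      thus False using emeasure_space_1 by (simp add: null_sets_def)
    qed
  qed
qed



lemma saddle_abstract:
  fixes S :: "'a::euclidean_space set" and T :: "'b::euclidean_space set"
    and PA :: "'b \<Rightarrow> 'a" and PB :: "'a \<Rightarrow> 'b" and f :: "'a \<Rightarrow> 'b \<Rightarrow> real"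
  assumes S: "compact S" "convex S" "S \<noteq> {}" and T: "compact T" "convex T" "T \<noteq> {}"
    and L: "linear PA" "linear PB"
    and f1: "\<And>u v. f u v = inner u (PA v)" and f2: "\<And>u v. f u v = inner (PB u) v"
  shows "\<exists>us\<in>S. \<exists>vs\<in>T. \<forall>u\<in>S. \<forall>v\<in>T. f u vs \<le> f us vs \<and> f us vs \<le> f us v"
proof -
  define F where "F = (\<lambda>(u,v). (closest_point S (u + PA v), closest_point T (v - PB u)))"
  have cS: "closed S" "closed T" using S T compact_imp_closed by auto
  have "continuous_on (S \<times> T) F"
    unfolding F_def case_prod_unfold
    apply (intro continuous_intros continuous_on_compose2[OF continuous_on_closest_point[OF S(2) cS(1) S(3)], where t=UNIV]
       continuous_on_compose2[OF continuous_on_closest_point[OF T(2) cS(2) T(3)], where t=UNIV]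
       linear_continuous_on_compose[OF _ L(1)] linear_continuous_on_compose[OF _ L(2)] )
    by auto
  moreover have "F \<in> S \<times> T \<rightarrow> S \<times> T"
    unfolding F_def using closest_point_in_set[OF cS(1) S(3)] closest_point_in_set[OF cS(2) T(3)] by auto
  ultimately obtain x where x: "x \<in> S \<times> T" "F x = x"
    using brouwer[of "S \<times> T" F] S T by (auto simp: compact_Times convex_Times)
  obtain us vs where xe: "x = (us, vs)" by (cases x)
  have us: "us \<in> S" and vs: "vs \<in> T" using x xe by auto
  have e1: "closest_point S (us + PA vs) = us" and e2: "closest_point T (vs - PB us) = vs"
    using x(2) xe F_def by auto
  show ?thesis
  proof (intro bexI[OF _ us] bexI[OF _ vs] ballI conjI)
    fix u assume "u \<in> S"
    from closest_point_dot[OF S(2) cS(1) this, of "us + PA vs"] e1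
    have "inner (PA vs) (u - us) \<le> 0" by simp
    then show "f u vs \<le> f us vs" unfolding f1 by (simp add: inner_diff_right inner_commute)
  next
    fix v assume "v \<in> T"
    from closest_point_dot[OF T(2) cS(2) this, of "vs - PB us"] e2
    have "inner (- PB us) (v - vs) \<le> 0" by simp
    then show "f us vs \<le> f us v" unfolding f2 by (simp add: inner_diff_right)
  qed
qed

lemma adm_nonneg: "admissible_k p k \<Longrightarrow> 0 \<le> k"
  unfolding admissible_k_def using CES_quantile_nonneg by auto

theorem theorem10:
  fixes A :: "complex^'m^'n"
    and a1 a2 b d p1 p2 k1 k2 :: real
    and muB :: "complex^'n" and muD :: "complex^'m"
    and GB JB :: "complex^'n^'n" and GD JD :: "complex^'m^'m"
  assumes "a1 \<ge> 1 / sqrt (real CARD('n))" and "a2 \<ge> 1 / sqrt (real CARD('m))"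
    and "cov_pair GB JB" and "cov_pair GD JD"
    and "admissible_k p1 k1" and "admissible_k p2 k2"
    and "\<exists>u0. u0 \<in> S1 a1 muB b GB JB k1 \<and> norm u0 < a1 \<and> (\<forall>i. 0 < Re (u0$i))
              \<and> Re (lin muB u0) + k1 * sqrt (varq GB JB u0) < b"
    and "\<exists>v0. v0 \<in> S2 a2 muD d GD JD k2 \<and> norm v0 < a2 \<and> (\<forall>i. 0 < Re (v0$i))
              \<and> Re (lin muD v0) - k2 * sqrt (varq GD JD v0) > d"
  shows "\<exists>us \<in> S1 a1 muB b GB JB k1. \<exists>vs \<in> S2 a2 muD d GD JD k2.
           \<forall>u \<in> S1 a1 muB b GB JB k1. \<forall>v \<in> S2 a2 muD d GD JD k2.
             Re (bilin u A vs) \<le> Re (bilin us A vs) \<and> Re (bilin us A vs) \<le> Re (bilin us A v)"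
  proof -
  have k1: "0 \<le> k1" and k2: "0 \<le> k2" using assms(5,6) adm_nonneg by auto
  have q1: "\<forall>u. 0 \<le> varq GB JB u" and q2: "\<forall>u. 0 \<le> varq GD JD u"
    using assms(3,4) unfolding cov_pair_def by auto
  have ne1: "S1 a1 muB b GB JB k1 \<noteq> {}" using assms(7) by blast
  have ne2: "S2 a2 muD d GD JD k2 \<noteq> {}" using assms(8) by blast
  show ?thesis
    using saddle_abstract[where f = "\<lambda>u v. Re (bilin u A v)" and PA = "L1 A" and PB = "L2 A",
        OF compact_S1 convex_S1[OF q1 k1] ne1 compact_S2 convex_S2[OF q2 k2] ne2
        linear_L1 linear_L2 bilin_L1 bilin_L2] by simp
qed

end
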